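(* Let $N$ be an odd prime, $V=\mathbb{Z}_N\times\mathbb{Z}_N$, and let $X=\{v_1,\dots,v_r\}\subset V$ be a set of $r$ points. Choose at random three (pairwise distinct) lines $L,M,M^\circ\subset V$, and assume that $X$ is generic with respect to each of $L$, $M$ and $M^\circ$. Then the probability $P$ that $X$ is perfect with respect to $L,M,M^\circ$ satisfies $$P\ge 1-\frac{r(r^2-r)}{N}.$$
   Context: A line in $V$ means a subset through $(0,0)$ of the form $\{(\tau,a\tau):\tau\in\mathbb{Z}_N\}$, $a\in\mathbb{Z}_N$, or $\{(0,\omega):\omega\in\mathbb{Z}_N\}$ ($N+1$ lines in total); a shifted line is a set $L+v$ with $L$ a line and $v\in V$. A set $X\subset V$ is generic with respect to a line $L$ if $u-v\notin L$ for all distinct $u,v\in X$. For a family $\mathcal{F}$ of shifted lines, a point $v\in V$ is an incidence point of $\mathcal{F}$ if it lies on at least two shifted lines of $\mathcal{F}$, and its incidence number is the number of shifted lines of $\mathcal{F}$ containing it. A collection $v_1,\dots,v_r$ is perfect with respect to lines $L_1,\dots,L_d$ if $v_1,\dots,v_r$ are the only incidence points of $\mathcal{F}=\{v_i+L_j:1\le i\le r,\,1\le j\le d\}$ with incidence number $d$. The probability is over the random choice of the lines, given the genericity assumption. *)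

theory Defs
  imports Complex_Main "HOL-Computational_Algebra.Primes"
begin

text \<open>Z_N is represented by the residues {0..<N} (as integers), V = Z_N x Z_N.\<close>

definition Vsp :: "nat \<Rightarrow> (int \<times> int) set" where
  "Vsp N = {0..<int N} \<times> {0..<int N}"

definition vadd :: "nat \<Rightarrow> int \<times> int \<Rightarrow> int \<times> int \<Rightarrow> int \<times> int" where
  "vadd N u v = ((fst u + fst v) mod int N, (snd u + snd v) mod int N)"

definition vsub :: "nat \<Rightarrow> int \<times> int \<Rightarrow> int \<times> int \<Rightarrow> int \<times> int" where
  "vsub N u v = ((fst u - fst v) mod int N, (snd u - snd v) mod int N)"

definition slope_line :: "nat \<Rightarrow> int \<Rightarrow> (int \<times> int) set" where
  "slope_line N a = {(t, (a * t) mod int N) | t. t \<in> {0..<int N}}"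

definition vert_line :: "nat \<Rightarrow> (int \<times> int) set" where
  "vert_line N = {(0, w) | w. w \<in> {0..<int N}}"

definition lines :: "nat \<Rightarrow> (int \<times> int) set set" where
  "lines N = slope_line N ` {0..<int N} \<union> {vert_line N}"

definition shift :: "nat \<Rightarrow> (int \<times> int) set \<Rightarrow> int \<times> int \<Rightarrow> (int \<times> int) set" where
  "shift N L v = (\<lambda>x. vadd N x v) ` L"

definition generic :: "nat \<Rightarrow> (int \<times> int) set \<Rightarrow> (int \<times> int) set \<Rightarrow> bool" where
  "generic N X L \<longleftrightarrow> (\<forall>u\<in>X. \<forall>v\<in>X. u \<noteq> v \<longrightarrow> vsub N u v \<notin> L)"

definition family :: "nat \<Rightarrow> (int \<times> int) set \<Rightarrow> (int \<times> int) set set \<Rightarrow> (int \<times> int) set set" where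
  "family N X Ls = {shift N L v | v L. v \<in> X \<and> L \<in> Ls}"

definition incidence_number :: "(int \<times> int) set set \<Rightarrow> int \<times> int \<Rightarrow> nat" where
  "incidence_number F p = card {l \<in> F. p \<in> l}"

definition incidence_point :: "nat \<Rightarrow> (int \<times> int) set set \<Rightarrow> int \<times> int \<Rightarrow> bool" where
  "incidence_point N F p \<longleftrightarrow> p \<in> Vsp N \<and> 2 \<le> incidence_number F p"

definition perfect :: "nat \<Rightarrow> (int \<times> int) set \<Rightarrow> (int \<times> int) set set \<Rightarrow> bool" where
  "perfect N X Ls \<longleftrightarrow>
     {p. incidence_point N (family N X Ls) p \<and> incidence_number (family N X Ls) p = card Ls} = X"

text \<open>Sample space: ordered triples of pairwise distinct lines w.r.t. which X is generic
  (uniform distribution, conditioned on genericity).\<close>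
definition generic_triples :: "nat \<Rightarrow> (int \<times> int) set \<Rightarrow>
    ((int \<times> int) set \<times> (int \<times> int) set \<times> (int \<times> int) set) set" where
  "generic_triples N X = {(L, M, M'). L \<in> lines N \<and> M \<in> lines N \<and> M' \<in> lines N \<and>
      L \<noteq> M \<and> L \<noteq> M' \<and> M \<noteq> M' \<and> generic N X L \<and> generic N X M \<and> generic N X M'}"

definition perfect_prob :: "nat \<Rightarrow> (int \<times> int) set \<Rightarrow> real" where
  "perfect_prob N X =
     real (card {(L, M, M') \<in> generic_triples N X. perfect N X {L, M, M'}})
     / real (card (generic_triples N X))"

end

theory Submission
  imports Defs
begin

definition lin :: "nat \<Rightarrow> int \<Rightarrow> int \<Rightarrow> int \<Rightarrow> bool" where
  "lin N k d1 d2 = (if k < int N then int N dvd (d2 - k * d1) else int N dvd d1)"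

definition lineK :: "nat \<Rightarrow> int \<Rightarrow> (int \<times> int) set" where
  "lineK N k = (if k < int N then slope_line N k else vert_line N)"

lemma lines_eq: "lines N = lineK N ` {0..int N}"
proof -
  have "{0..int N} = {0..<int N} \<union> {int N}" by auto
  then show ?thesis unfolding lines_def lineK_def by (auto simp: image_iff)
qed

lemma lin_diff:
  assumes "lin N k a1 a2" "lin N k b1 b2" shows "lin N k (a1 - b1) (a2 - b2)"
proof -
  have e: "a2 - b2 - k * (a1 - b1) = (a2 - k*a1) - (b2 - k*b1)" by (simp add: algebra_simps)
  show ?thesis using assms unfolding lin_def
    by (cases "k < int N") (simp_all only: if_True if_False e, auto intro: dvd_diff)
qed

lemma lin_zero: "lin N k 0 0" unfolding lin_def by auto

lemma lin_unique:
  assumes "prime N" "k \<in> {0..int N}" "k' \<in> {0..int N}" "k \<noteq> k'"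
    "lin N k d1 d2" "lin N k' d1 d2"
  shows "int N dvd d1 \<and> int N dvd d2"
proof -
  have pr: "prime (int N)" using assms(1) by simp
  show ?thesis
  proof (cases "k < int N \<and> k' < int N")
    case True
    then have h1: "int N dvd (d2 - k*d1)" "int N dvd (d2 - k'*d1)" using assms unfolding lin_def by auto
    then have "int N dvd ((d2 - k'*d1) - (d2 - k*d1))" by (rule dvd_diff[rotated])
    then have "int N dvd ((k - k') * d1)" by (simp add: algebra_simps)
    moreover have "\<not> int N dvd (k - k')"
    proof
      assume "int N dvd (k - k')"
      moreover have "k - k' \<noteq> 0" "\<bar>k - k'\<bar> < int N" using True assms by auto
      ultimately show False using dvd_imp_le_int[of "k-k'" "int N"] by auto
    qed
    ultimately have d1: "int N dvd d1" using pr prime_dvd_mult_iff by blast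
    then have "int N dvd k * d1" by simp
    then have "int N dvd (d2 - k*d1) + k*d1" using h1 dvd_add by blast
    then show ?thesis using d1 by simp
  next
    case False
    then have "k = int N \<or> k' = int N" using assms by auto
    then show ?thesis
    proof
      assume kN: "k = int N"
      then have k'N: "k' < int N" using assms by auto
      have d1: "int N dvd d1" using assms kN unfolding lin_def by auto
      have "int N dvd (d2 - k'*d1)" using assms k'N unfolding lin_def by auto
      moreover have "int N dvd k' * d1" using d1 by simp
      ultimately have "int N dvd (d2 - k'*d1) + k'*d1" using dvd_add by blast
      then show ?thesis using d1 by simp
    next
      assume kN: "k' = int N"
      then have k'N: "k < int N" using assms by auto
      have d1: "int N dvd d1" using assms kN unfolding lin_def by auto
      have "int N dvd (d2 - k*d1)" using assms k'N unfolding lin_def by auto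
      moreover have "int N dvd k * d1" using d1 by simp
      ultimately have "int N dvd (d2 - k*d1) + k*d1" using dvd_add by blast
      then show ?thesis using d1 by simp
    qed
  qed
qed

lemma dvd_range_eq:
  fixes x y :: int assumes "0 \<le> x" "x < n" "0 \<le> y" "y < n" "n dvd x - y" shows "x = y"
proof -
  have "x mod n = y mod n" using assms(5) by (simp add: mod_eq_dvd_iff)
  then show ?thesis using assms by simp
qed

lemma vsub_in_lineK:
  assumes "N > 0" "k \<in> {0..int N}"
  shows "vsub N u v \<in> lineK N k \<longleftrightarrow> lin N k (fst u - fst v) (snd u - snd v)"
proof (cases "k < int N")
  case True
  let ?a = "fst u - fst v" and ?b = "snd u - snd v"
  have "vsub N u v \<in> lineK N k \<longleftrightarrow> ?b mod int N = (k * (?a mod int N)) mod int N"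
    using True assms unfolding vsub_def lineK_def slope_line_def by auto
  also have "\<dots> \<longleftrightarrow> ?b mod int N = (k * ?a) mod int N" by (simp add: mod_mult_right_eq)
  also have "\<dots> \<longleftrightarrow> int N dvd (?b - k * ?a)" by (simp add: mod_eq_dvd_iff)
  finally show ?thesis using True unfolding lin_def by simp
next
  case False
  then show ?thesis using assms unfolding vsub_def lineK_def vert_line_def lin_def
    by (auto simp: dvd_eq_mod_eq_0)
qed

lemma lineK_sub: "N > 0 \<Longrightarrow> lineK N k \<subseteq> Vsp N"
  unfolding lineK_def slope_line_def vert_line_def Vsp_def by auto

lemma vadd_in: "N > 0 \<Longrightarrow> vadd N x v \<in> Vsp N"
  unfolding vadd_def Vsp_def by auto

lemma vsub_vadd: assumes "x \<in> Vsp N" shows "vsub N (vadd N x v) v = x"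
proof -
  have "((fst x + fst v) mod int N - fst v) mod int N = fst x mod int N"
    by (metis add_diff_cancel_right' mod_diff_left_eq)
  moreover have "((snd x + snd v) mod int N - snd v) mod int N = snd x mod int N"
    by (metis add_diff_cancel_right' mod_diff_left_eq)
  ultimately show ?thesis using assms unfolding vsub_def vadd_def Vsp_def
    by (cases x) auto
qed

lemma vadd_vsub: assumes "p \<in> Vsp N" shows "vadd N (vsub N p v) v = p"
proof -
  have "((fst p - fst v) mod int N + fst v) mod int N = fst p mod int N"
    by (metis diff_add_cancel mod_add_left_eq)
  moreover have "((snd p - snd v) mod int N + snd v) mod int N = snd p mod int N"
    by (metis diff_add_cancel mod_add_left_eq)
  ultimately show ?thesis using assms unfolding vsub_def vadd_def Vsp_def
    by (cases p) auto
qed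

lemma shift_mem:
  assumes "N > 0" "L \<subseteq> Vsp N"
  shows "p \<in> shift N L v \<longleftrightarrow> p \<in> Vsp N \<and> vsub N p v \<in> L"
proof
  assume "p \<in> shift N L v"
  then obtain x where x: "x \<in> L" "p = vadd N x v" unfolding shift_def by auto
  have "x \<in> Vsp N" using x(1) assms(2) by blast
  then show "p \<in> Vsp N \<and> vsub N p v \<in> L" using x assms(1) vadd_in vsub_vadd by metis
next
  assume "p \<in> Vsp N \<and> vsub N p v \<in> L"
  then show "p \<in> shift N L v" unfolding shift_def using vadd_vsub
    by (metis image_eqI)
qed

lemma shiftK:
  assumes "N > 0" "k \<in> {0..int N}"
  shows "p \<in> shift N (lineK N k) v \<longleftrightarrow> p \<in> Vsp N \<and> lin N k (fst p - fst v) (snd p - snd v)"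
  using shift_mem[OF assms(1) lineK_sub[OF assms(1)]] vsub_in_lineK[OF assms] by auto

lemma vsp_eq:
  assumes "p \<in> Vsp N" "q \<in> Vsp N" "int N dvd fst p - fst q" "int N dvd snd p - snd q"
  shows "p = q"
  using assms dvd_range_eq[of "fst p" "int N" "fst q"] dvd_range_eq[of "snd p" "int N" "snd q"]
  unfolding Vsp_def by (auto simp: prod_eq_iff)

lemma genericK:
  assumes "N > 0" "k \<in> {0..int N}"
  shows "generic N X (lineK N k) \<longleftrightarrow> (\<forall>u\<in>X. \<forall>v\<in>X. u \<noteq> v \<longrightarrow> \<not> lin N k (fst u - fst v) (snd u - snd v))"
  unfolding generic_def using vsub_in_lineK[OF assms] by auto

lemma lin_diff2:
  assumes "lin N k (p1 - a1) (p2 - a2)" "lin N k (q1 - a1) (q2 - a2)"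
  shows "lin N k (p1 - q1) (p2 - q2)"
  using lin_diff[OF assms] by simp

lemma inter_unique:
  assumes "prime N" "k \<in> {0..int N}" "k' \<in> {0..int N}" "k \<noteq> k'"
    "p \<in> shift N (lineK N k) a" "p \<in> shift N (lineK N k') b"
    "q \<in> shift N (lineK N k) a" "q \<in> shift N (lineK N k') b"
  shows "p = q"
proof -
  have N: "N > 0" using assms(1) prime_gt_0_nat by blast
  note s1 = shiftK[OF N assms(2)] and s2 = shiftK[OF N assms(3)]
  have "lin N k (fst p - fst q) (snd p - snd q)"
    using assms(5,7) s1 lin_diff2 by blast
  moreover have "lin N k' (fst p - fst q) (snd p - snd q)"
    using assms(6,8) s2 lin_diff2 by blast
  ultimately show ?thesis using lin_unique[OF assms(1-4)] vsp_eq assms(5,7) s1 by blast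
qed

lemma line_through:
  assumes "prime N" "k \<in> {0..int N}" "k' \<in> {0..int N}" "k \<noteq> k'" "c \<in> Vsp N"
    "p \<in> shift N (lineK N k) c" "p \<in> shift N (lineK N k') c"
  shows "p = c"
proof -
  have N: "N > 0" using assms(1) prime_gt_0_nat by blast
  have "c \<in> shift N (lineK N k) c" "c \<in> shift N (lineK N k') c"
    using shiftK[OF N assms(2)] shiftK[OF N assms(3)] assms(5) lin_zero by auto
  then show ?thesis using inter_unique[OF assms(1-4) assms(6,7)] by blast
qed

lemma lineK_inj:
  assumes "prime N" "k \<in> {0..int N}" "k' \<in> {0..int N}" "lineK N k = lineK N k'"
  shows "k = k'"
proof (rule ccontr)
  assume ne: "k \<noteq> k'"
  have N: "N > 1" using assms(1) prime_gt_1_nat by blast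
  define x where "x = (if k < int N then (1, k) else (0::int, 1::int))"
  have xV: "x \<in> Vsp N" using N assms(2) unfolding x_def Vsp_def by auto
  have vx: "vsub N x (0,0) = x" using xV unfolding vsub_def Vsp_def by (cases x) auto
  have "lin N k (fst x - 0) (snd x - 0)" unfolding x_def lin_def by auto
  then have "x \<in> lineK N k" using vsub_in_lineK[OF _ assms(2), of x "(0,0)"] vx N by simp
  then have "x \<in> lineK N k'" using assms(4) by simp
  then have "lin N k' (fst x - 0) (snd x - 0)" using vsub_in_lineK[OF _ assms(3), of x "(0,0)"] vx N by simp
  then have "int N dvd fst x \<and> int N dvd snd x"
    using lin_unique[OF assms(1-3) ne, of "fst x" "snd x"] \<open>lin N k (fst x - 0) (snd x - 0)\<close> by simp
  then show False using N unfolding x_def by (auto split: if_splits)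
qed

lemma shift_inj:
  assumes "N > 0" "L \<subseteq> Vsp N" "M \<subseteq> Vsp N" "shift N L v = shift N M v"
  shows "L = M"
proof -
  have "x \<in> L \<longleftrightarrow> x \<in> M" if "x \<in> Vsp N" for x
    using shift_mem[OF assms(1,2), of "vadd N x v" v] shift_mem[OF assms(1,3), of "vadd N x v" v]
      assms(4) vsub_vadd[OF that] vadd_in[OF assms(1)] by auto
  then show ?thesis using assms(2,3) by blast
qed

lemma finite_Vsp: "finite (Vsp N)" unfolding Vsp_def by auto

lemma linesE:
  assumes "L \<in> lines N" obtains k where "k \<in> {0..int N}" "L = lineK N k"
  using assms lines_eq by auto

lemma lines_sub: "N > 0 \<Longrightarrow> L \<in> lines N \<Longrightarrow> L \<subseteq> Vsp N"
  using lineK_sub by (auto elim: linesE)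

lemma line_through':
  assumes "prime N" "L \<in> lines N" "M \<in> lines N" "L \<noteq> M" "c \<in> Vsp N"
    "p \<in> shift N L c" "p \<in> shift N M c"
  shows "p = c"
proof -
  obtain k k' where "k \<in> {0..int N}" "L = lineK N k" "k' \<in> {0..int N}" "M = lineK N k'"
    using assms(2,3) by (meson linesE)
  moreover have "k \<noteq> k'" using calculation assms(4) by auto
  ultimately show ?thesis using line_through[OF assms(1), of k k' c p] assms(5-7) by blast
qed

lemma inter_unique':
  assumes "prime N" "L \<in> lines N" "M \<in> lines N" "L \<noteq> M"
    "p \<in> shift N L a" "p \<in> shift N M b" "q \<in> shift N L a" "q \<in> shift N M b"
  shows "p = q"
proof -
  obtain k k' where "k \<in> {0..int N}" "L = lineK N k" "k' \<in> {0..int N}" "M = lineK N k'"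
    using assms(2,3) by (meson linesE)
  moreover have "k \<noteq> k'" using calculation assms(4) by auto
  ultimately show ?thesis using inter_unique[OF assms(1), of k k' p a b q] assms(5-8) by blast
qed

lemma gen_notin:
  assumes "prime N" "L \<in> lines N" "generic N X L" "v \<in> X" "w \<in> X" "v \<in> shift N L w"
  shows "v = w"
proof -
  have N: "N > 0" using assms(1) prime_gt_0_nat by blast
  obtain k where k: "k \<in> {0..int N}" "L = lineK N k" using assms(2) by (meson linesE)
  show ?thesis using assms(3-6) shiftK[OF N k(1)] genericK[OF N k(1)] k(2) by blast
qed

lemma same_line:
  assumes "prime N" "L \<in> lines N" "generic N X L" "a \<in> X" "b \<in> X"
    "p \<in> shift N L a" "p \<in> shift N L b"
  shows "a = b"
proof -
  have N: "N > 0" using assms(1) prime_gt_0_nat by blast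
  obtain k where k: "k \<in> {0..int N}" "L = lineK N k" using assms(2) by (meson linesE)
  have "lin N k (fst p - fst b - (fst p - fst a)) (snd p - snd b - (snd p - snd a))"
    using lin_diff assms(6,7) shiftK[OF N k(1)] k(2) by blast
  then have "lin N k (fst a - fst b) (snd a - snd b)" by simp
  then show ?thesis using assms(3-5) genericK[OF N k(1)] k(2) by blast
qed

lemma self_in:
  assumes "N > 0" "L \<in> lines N" "v \<in> Vsp N" shows "v \<in> shift N L v"
proof -
  obtain k where k: "k \<in> {0..int N}" "L = lineK N k" using assms(2) by (meson linesE)
  show ?thesis using shiftK[OF assms(1) k(1)] k(2) assms(3) lin_zero by auto
qed

lemma inc_X:
  assumes "prime N" "X \<subseteq> Vsp N" "Ls \<subseteq> lines N" "\<forall>L\<in>Ls. generic N X L" "v \<in> X"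
  shows "{l \<in> family N X Ls. v \<in> l} = (\<lambda>L. shift N L v) ` Ls"
proof
  have N: "N > 0" using assms(1) prime_gt_0_nat by blast
  show "(\<lambda>L. shift N L v) ` Ls \<subseteq> {l \<in> family N X Ls. v \<in> l}"
    using self_in[OF N] assms unfolding family_def by blast
  show "{l \<in> family N X Ls. v \<in> l} \<subseteq> (\<lambda>L. shift N L v) ` Ls"
  proof
    fix l assume "l \<in> {l \<in> family N X Ls. v \<in> l}"
    then obtain w L where "w \<in> X" "L \<in> Ls" "l = shift N L w" "v \<in> l" unfolding family_def by blast
    then show "l \<in> (\<lambda>L. shift N L v) ` Ls" using gen_notin[OF assms(1), of L X v w] assms by blast
  qed
qed

lemma inc_X_card:
  assumes "prime N" "X \<subseteq> Vsp N" "Ls \<subseteq> lines N" "\<forall>L\<in>Ls. generic N X L" "v \<in> X"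
  shows "incidence_number (family N X Ls) v = card Ls"
proof -
  have N: "N > 0" using assms(1) prime_gt_0_nat by blast
  have "inj_on (\<lambda>L. shift N L v) Ls"
    using shift_inj[OF N] lines_sub[OF N] assms(3) by (meson inj_onI subsetD)
  then show ?thesis unfolding incidence_number_def inc_X[OF assms] by (simp add: card_image)
qed

lemma inc_other:
  assumes "prime N" "X \<subseteq> Vsp N" "Ls \<subseteq> lines N" "\<forall>L\<in>Ls. generic N X L" "finite Ls"
    "incidence_number (family N X Ls) p = card Ls"
  shows "\<forall>L\<in>Ls. \<exists>w\<in>X. p \<in> shift N L w"
proof -
  define Ls' where "Ls' = {L\<in>Ls. \<exists>w\<in>X. p \<in> shift N L w}"
  define g where "g L = shift N L (SOME w. w \<in> X \<and> p \<in> shift N L w)" for L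
  have "{l \<in> family N X Ls. p \<in> l} \<subseteq> g ` Ls'"
  proof
    fix l assume "l \<in> {l \<in> family N X Ls. p \<in> l}"
    then obtain w L where wL: "w \<in> X" "L \<in> Ls" "l = shift N L w" "p \<in> l" unfolding family_def by blast
    then have L': "L \<in> Ls'" unfolding Ls'_def by blast
    let ?w = "SOME w. w \<in> X \<and> p \<in> shift N L w"
    have "?w \<in> X \<and> p \<in> shift N L ?w" using wL by (metis (mono_tags, lifting) someI)
    then have "?w = w" using same_line[OF assms(1), of L X ?w w p] wL assms(3,4) by blast
    then show "l \<in> g ` Ls'" using L' wL unfolding g_def by auto
  qed
  have fLs': "finite Ls'" using assms(5) unfolding Ls'_def by auto
  have "card Ls \<le> card (g ` Ls')"
    using assms(6) card_mono[OF finite_imageI[OF fLs'] \<open>_ \<subseteq> g ` Ls'\<close>]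
    unfolding incidence_number_def by simp
  also have "\<dots> \<le> card Ls'" using card_image_le[OF fLs'] .
  finally have "card Ls \<le> card Ls'" .
  moreover have "Ls' \<subseteq> Ls" unfolding Ls'_def by auto
  ultimately have "Ls' = Ls" using card_seteq[OF assms(5)] by blast
  then show ?thesis unfolding Ls'_def by blast
qed

lemma bad_witness:
  assumes "prime N" "X \<subseteq> Vsp N" "L \<in> lines N" "M \<in> lines N" "M' \<in> lines N"
    "L \<noteq> M" "L \<noteq> M'" "M \<noteq> M'" "generic N X L" "generic N X M" "generic N X M'"
    "\<not> perfect N X {L, M, M'}"
  shows "\<exists>a b c p. a \<in> X \<and> b \<in> X \<and> c \<in> X \<and> a \<noteq> b \<and> a \<noteq> c \<and> b \<noteq> c \<and> p \<notin> X \<and>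
     p \<in> shift N L a \<and> p \<in> shift N M b \<and> p \<in> shift N M' c"
proof -
  define Ls where "Ls = {L, M, M'}"
  have c3: "card Ls = 3" unfolding Ls_def using assms(6-8) by auto
  have fin: "finite Ls" unfolding Ls_def by auto
  have sub: "Ls \<subseteq> lines N" unfolding Ls_def using assms(3-5) by auto
  have gen: "\<forall>L\<in>Ls. generic N X L" unfolding Ls_def using assms(9-11) by auto
  define S where "S = {p. incidence_point N (family N X Ls) p \<and> incidence_number (family N X Ls) p = card Ls}"
  have "X \<subseteq> S"
  proof
    fix v assume v: "v \<in> X"
    have "incidence_number (family N X Ls) v = card Ls" using inc_X_card[OF assms(1,2) sub gen v] .
    then show "v \<in> S" unfolding S_def incidence_point_def using c3 v assms(2) by auto
  qed
  moreover have "S \<noteq> X" using assms(12) unfolding perfect_def S_def Ls_def by simp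
  ultimately obtain p where p: "p \<in> S" "p \<notin> X" by blast
  have "incidence_number (family N X Ls) p = card Ls" using p(1) unfolding S_def by simp
  from inc_other[OF assms(1,2) sub gen fin this]
  obtain a b c where abc: "a \<in> X" "b \<in> X" "c \<in> X" "p \<in> shift N L a" "p \<in> shift N M b" "p \<in> shift N M' c"
    unfolding Ls_def by blast
  have "a \<noteq> b" using line_through'[OF assms(1,3,4,6), of a p] abc p(2) assms(2) by blast
  moreover have "a \<noteq> c" using line_through'[OF assms(1,3,5,7), of a p] abc p(2) assms(2) by blast
  moreover have "b \<noteq> c" using line_through'[OF assms(1,4,5,8), of b p] abc p(2) assms(2) by blast
  ultimately show ?thesis using abc p(2) by blast
qed

lemma card_pairs:
  assumes "finite A" shows "card (Sigma A (\<lambda>a. A - {a})) = card A * (card A - 1)"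
proof -
  have "card (Sigma A (\<lambda>a. A - {a})) = (\<Sum>a\<in>A. card (A - {a}))"
    using assms by (simp add: card_SigmaI)
  also have "\<dots> = (\<Sum>a\<in>A. card A - 1)" by (rule sum.cong) (auto simp: assms)
  finally show ?thesis by simp
qed

lemma card_triples:
  assumes "finite A"
  shows "card (Sigma A (\<lambda>a. Sigma (A - {a}) (\<lambda>b. A - {a, b}))) = card A * ((card A - 1) * (card A - 2))"
proof -
  have inner: "card (Sigma (A - {a}) (\<lambda>b. A - {a, b})) = (card A - 1) * (card A - 2)" if "a \<in> A" for a
  proof -
    have "card (Sigma (A - {a}) (\<lambda>b. A - {a, b})) = (\<Sum>b\<in>A - {a}. card (A - {a, b}))"
      using assms by (simp add: card_SigmaI)
    also have "\<dots> = (\<Sum>b\<in>A - {a}. card A - 2)"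
    proof (rule sum.cong)
      fix b assume "b \<in> A - {a}"
      then have "card (A - {a, b}) = card A - card {a, b}" using assms that
        by (subst card_Diff_subset) auto
      moreover have "card {a, b} = 2" using \<open>b \<in> A - {a}\<close> by auto
      ultimately show "card (A - {a, b}) = card A - 2" by simp
    qed simp
    finally show ?thesis using that assms by simp
  qed
  have "card (Sigma A (\<lambda>a. Sigma (A - {a}) (\<lambda>b. A - {a, b}))) =
        (\<Sum>a\<in>A. card (Sigma (A - {a}) (\<lambda>b. A - {a, b})))"
    using assms by (simp add: card_SigmaI)
  also have "\<dots> = (\<Sum>a\<in>A. (card A - 1) * (card A - 2))" by (rule sum.cong) (auto simp: inner)
  finally show ?thesis by simp
qed

lemma card_lines: assumes "prime N" shows "card (lines N) = N + 1"
proof -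
  have "inj_on (lineK N) {0..int N}" using lineK_inj[OF assms] by (meson inj_onI)
  then have "card (lines N) = card {0..int N}" unfolding lines_eq by (simp add: card_image)
  also have "\<dots> = N + 1" by simp
  finally show ?thesis .
qed

lemma finite_lines: "finite (lines N)" unfolding lines_eq by simp

lemma nongeneric_card:
  assumes "prime N" "finite X" "X \<subseteq> Vsp N"
  shows "card {L \<in> lines N. \<not> generic N X L} \<le> card X * (card X - 1)"
proof -
  define h where "h uv = (SOME L. L \<in> lines N \<and> vsub N (fst uv) (snd uv) \<in> L)" for uv
  have "{L \<in> lines N. \<not> generic N X L} \<subseteq> h ` Sigma X (\<lambda>u. X - {u})"
  proof
    fix L assume "L \<in> {L \<in> lines N. \<not> generic N X L}"
    then obtain u v where uv: "L \<in> lines N" "u \<in> X" "v \<in> X" "u \<noteq> v" "vsub N u v \<in> L"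
      unfolding generic_def by blast
    let ?L = "h (u, v)"
    have L': "?L \<in> lines N \<and> vsub N u v \<in> ?L" unfolding h_def using uv
      by (metis (mono_tags, lifting) fst_conv snd_conv someI)
    have "?L = L"
    proof (rule ccontr)
      assume ne: "?L \<noteq> L"
      have N: "N > 0" using assms(1) prime_gt_0_nat by blast
      obtain k k' where k: "k \<in> {0..int N}" "L = lineK N k" "k' \<in> {0..int N}" "?L = lineK N k'"
        using uv(1) L' by (meson linesE)
      then have "k \<noteq> k'" using ne by auto
      then have "int N dvd fst u - fst v \<and> int N dvd snd u - snd v"
        using lin_unique[OF assms(1) k(1) k(3)] uv(5) L' vsub_in_lineK[OF N] k by auto
      then show False using vsp_eq[of u N v] uv assms(3) by blast
    qed
    then show "L \<in> h ` Sigma X (\<lambda>u. X - {u})" using uv by force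
  qed
  then have "card {L \<in> lines N. \<not> generic N X L} \<le> card (h ` Sigma X (\<lambda>u. X - {u}))"
    using assms(2) by (intro card_mono) auto
  also have "\<dots> \<le> card (Sigma X (\<lambda>u. X - {u}))" using assms(2) by (intro card_image_le) auto
  finally show ?thesis using card_pairs[OF assms(2)] by simp
qed

theorem mainTheorem3:
  fixes N r :: nat and X :: "(int \<times> int) set"
  assumes "prime N" and "odd N"
    and "X \<subseteq> Vsp N" and "card X = r"
  shows "perfect_prob N X \<ge> 1 - real r * (real r ^ 2 - real r) / real N"
proof -
  have N3: "N \<ge> 3" using assms(1,2) prime_ge_2_nat[OF assms(1)]
    by (metis dvd_refl le_antisym not_less_eq_eq numeral_2_eq_2 numeral_3_eq_3)
  have fX: "finite X" using assms(3) finite_Vsp finite_subset by blast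
  define GL where "GL = {L \<in> lines N. generic N X L}"
  define g where "g = card GL"
  have fGL: "finite GL" unfolding GL_def using finite_lines by simp
  have "card (lines N) = card GL + card {L \<in> lines N. \<not> generic N X L}"
    unfolding GL_def using finite_lines
    by (subst card_Un_disjoint[symmetric]) (auto intro: arg_cong[where f=card])
  moreover have "card {L \<in> lines N. \<not> generic N X L} \<le> r * (r - 1)"
    using nongeneric_card[OF assms(1) fX assms(3)] assms(4) by simp
  ultimately have hg: "g + r * (r - 1) \<ge> N + 1"
    using card_lines[OF assms(1)] g_def by linarith
  define GT where "GT = generic_triples N X"
  have GT_eq: "GT = Sigma GL (\<lambda>L. Sigma (GL - {L}) (\<lambda>M. GL - {L, M}))"
    unfolding GT_def generic_triples_def GL_def by auto
  have cGT: "card GT = g * ((g - 1) * (g - 2))" unfolding GT_eq g_def using card_triples[OF fGL] .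
  have fGT: "finite GT" unfolding GT_eq using fGL by auto
  define Good where "Good = {(L, M, M') \<in> GT. perfect N X {L, M, M'}}"
  define Bad where "Bad = GT - Good"
  have GsG: "Good \<subseteq> GT" unfolding Good_def by auto
  then have fGood: "finite Good" using fGT finite_subset by blast
  have "card Bad = card GT - card Good" unfolding Bad_def using card_Diff_subset[OF fGood GsG] .
  moreover have "card Good \<le> card GT" using card_mono[OF fGT GsG] .
  ultimately have cGood: "card Good = card GT - card Bad" by linarith
  define P2 where "P2 = Sigma GL (\<lambda>L. GL - {L})"
  define T3 where "T3 = Sigma X (\<lambda>a. Sigma (X - {a}) (\<lambda>b. X - {a, b}))"
  define f where "f x = (case x of ((L, M), (a, b, c)) \<Rightarrow>
      (L, M, SOME M'. M' \<in> lines N \<and> (\<exists>p. p \<in> shift N L a \<and> p \<in> shift N M b \<and> p \<in> shift N M' c)))"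
    for x :: "((int \<times> int) set \<times> (int \<times> int) set) \<times> (int \<times> int) \<times> (int \<times> int) \<times> (int \<times> int)"
  have "Bad \<subseteq> f ` (P2 \<times> T3)"
  proof
    fix t assume "t \<in> Bad"
    then obtain L M M' where t: "t = (L, M, M')" "(L, M, M') \<in> GT" "\<not> perfect N X {L, M, M'}"
      unfolding Bad_def Good_def by (cases t) auto
    then have l: "L \<in> lines N" "M \<in> lines N" "M' \<in> lines N" "L \<noteq> M" "L \<noteq> M'" "M \<noteq> M'"
      "generic N X L" "generic N X M" "generic N X M'"
      unfolding GT_def generic_triples_def by auto
    obtain a b c p where w: "a \<in> X" "b \<in> X" "c \<in> X" "a \<noteq> b" "a \<noteq> c" "b \<noteq> c" "p \<notin> X"
      "p \<in> shift N L a" "p \<in> shift N M b" "p \<in> shift N M' c"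
      using bad_witness[OF assms(1,3) l t(3)] by blast
    have D: "((L, M), (a, b, c)) \<in> P2 \<times> T3" unfolding P2_def T3_def GL_def using l w by auto
    let ?M = "SOME M'. M' \<in> lines N \<and> (\<exists>p. p \<in> shift N L a \<and> p \<in> shift N M b \<and> p \<in> shift N M' c)"
    have "?M \<in> lines N \<and> (\<exists>p. p \<in> shift N L a \<and> p \<in> shift N M b \<and> p \<in> shift N ?M c)"
      by (rule someI[of _ M']) (use l w in blast)
    then obtain q where q: "?M \<in> lines N" "q \<in> shift N L a" "q \<in> shift N M b" "q \<in> shift N ?M c" by blast
    have "q = p" using inter_unique'[OF assms(1) l(1,2,4) q(2,3) w(8,9)] .
    have "?M = M'"
    proof (rule ccontr)
      assume "?M \<noteq> M'"
      then have "p = c" using line_through'[OF assms(1) q(1) l(3) _ _ _ w(10)] q(4) \<open>q = p\<close> w(3) assms(3) by blast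
      then show False using w(3,7) by simp
    qed
    then have "f ((L, M), (a, b, c)) = t" unfolding f_def t(1) by simp
    then show "t \<in> f ` (P2 \<times> T3)" using D by force
  qed
  have fPT: "finite (P2 \<times> T3)" unfolding P2_def T3_def using fGL fX by auto
  have "card Bad \<le> card (P2 \<times> T3)"
    using card_mono[OF finite_imageI[OF fPT] \<open>Bad \<subseteq> _\<close>] card_image_le[OF fPT, of f] by linarith
  also have "\<dots> = (g * (g - 1)) * (r * ((r - 1) * (r - 2)))"
    unfolding card_cartesian_product P2_def T3_def using card_pairs[OF fGL] card_triples[OF fX] assms(4) g_def by simp
  finally have cBad: "card Bad \<le> (g * (g - 1)) * (r * ((r - 1) * (r - 2)))" .
  have prob: "perfect_prob N X = real (card GT - card Bad) / real (card GT)"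
    unfolding perfect_prob_def GT_def[symmetric] Good_def[symmetric] cGood ..
  have BG: "card Bad \<le> card GT" unfolding Bad_def using fGT by (simp add: card_mono)
  have Npos: "real N > 0" using N3 by simp
  show ?thesis
  proof (cases "real r * (real r ^ 2 - real r) \<ge> real N")
    case True
    then have "real r * (real r ^ 2 - real r) / real N \<ge> 1" using Npos by simp
    moreover have "perfect_prob N X \<ge> 0" unfolding prob by simp
    ultimately show ?thesis by linarith
  next
    case False
    define R where "R = real r"
    have lt: "R^2 * (R - 1) < real N" using False unfolding R_def by (simp add: power2_eq_square algebra_simps)
    show ?thesis
    proof (cases "r \<le> 1")
      case True
      then have "r * ((r - 1) * (r - 2)) = 0" "r * (r - 1) = 0" by auto
      then have B0: "card Bad = 0" and g4: "g \<ge> N + 1" using cBad hg by auto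
      then have "card GT > 0" unfolding cGT using N3 by simp
      then have "perfect_prob N X = 1" unfolding prob B0 by simp
      moreover have "real r ^ 2 - real r = 0" using True by (cases r) auto
      ultimately show ?thesis by simp
    next
      case False
      then have r2: "r \<ge> 2" by simp
      then have R2: "R \<ge> 2" unfolding R_def by simp
      have eT: "real (r * ((r - 1) * (r - 2))) = R * ((R - 1) * (R - 2))"
        using r2 unfolding R_def by (simp add: of_nat_diff)
      have eP: "real (r * (r - 1)) = R * (R - 1)" using r2 unfolding R_def by (simp add: of_nat_diff)
      have hgR: "real g + R * (R - 1) \<ge> real N + 1" using hg eP
        by (metis of_nat_add of_nat_le_iff of_nat_1)
      have "R * (R - 1) \<ge> 2 * 1" using R2 by (intro mult_mono) auto
      then have q1: "R * (R - 1) \<ge> 2" by simp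
      have q2: "R * (R * (R - 1)) \<ge> 2 * (R * (R - 1))" using R2 q1 by (intro mult_right_mono) auto
      have q3: "R^2 * (R - 1) = R * (R * (R - 1))" by (simp add: power2_eq_square)
      have g3R: "real g > 2.5" using hgR q2 q3 lt N3 by auto
      then have g3: "g \<ge> 3" by simp
      define D where "D = real g - 2"
      have Dpos: "D > 0" unfolding D_def using g3R by simp
      define P where "P = real g * (real g - 1)"
      have Ppos: "P > 0" unfolding P_def using g3R by simp
      have eG: "real (card GT) = P * D" unfolding cGT P_def D_def using g3 by (simp add: of_nat_diff)
      have eB: "real (card Bad) \<le> P * (R * ((R - 1) * (R - 2)))"
      proof -
        have "real (card Bad) \<le> real (g * (g - 1) * (r * ((r - 1) * (r - 2))))"
          using cBad by (simp only: of_nat_le_iff)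
        also have "\<dots> = real (g * (g - 1)) * real (r * ((r - 1) * (r - 2)))" by (simp only: of_nat_mult)
        also have "real (g * (g - 1)) = P" unfolding P_def using g3 by (simp add: of_nat_diff)
        finally show ?thesis using eT by simp
      qed
      have "R * 1 \<le> R * (R * (R - 1))" using q1 R2 by (intro mult_left_mono) auto
      then have RN: "R \<le> real N" using q3 lt by linarith
      have key: "(R - 2) * real N \<le> R * D"
      proof -
        have "R * D \<ge> R * (real N - 1 - R * (R - 1))" unfolding D_def using hgR R2
          by (intro mult_left_mono) auto
        also have "R * (real N - 1 - R * (R - 1)) = R * real N - R - R * (R * (R - 1))"
          by (simp add: algebra_simps)
        finally show ?thesis using lt q3 RN by (simp add: algebra_simps)
      qed
      have key2: "R * ((R - 1) * (R - 2)) * real N \<le> R * (R^2 - R) * D"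
      proof -
        have "R * (R - 1) * ((R - 2) * real N) \<le> R * (R - 1) * (R * D)"
          using key q1 by (intro mult_left_mono) auto
        then show ?thesis by (simp add: algebra_simps power2_eq_square)
      qed
      have "real (card Bad) / real (card GT) \<le> P * (R * ((R - 1) * (R - 2))) / (P * D)"
        unfolding eG using eB Ppos Dpos by (intro divide_right_mono) auto
      also have "\<dots> = R * ((R - 1) * (R - 2)) / D" using Ppos by simp
      also have "\<dots> \<le> R * (R^2 - R) / real N"
        using key2 Dpos Npos by (simp add: divide_le_eq le_divide_eq mult.commute mult.left_commute)
      finally have "real (card Bad) / real (card GT) \<le> R * (R^2 - R) / real N" .
      moreover have "perfect_prob N X = 1 - real (card Bad) / real (card GT)"
        unfolding prob using BG eG Ppos Dpos by (simp add: of_nat_diff diff_divide_distrib)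
      ultimately show ?thesis unfolding R_def by simp
    qed
  qed
qed

end
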